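(* Let $F_1,F_2$ be analytic in a neighborhood of $1$, let $k,l$ be positive integers, and let $\mathbf a^{l,r}_{i,[2]}$ be the Taylor coefficients $x^lF_2(x)^{l-r}=\sum_{n\ge0}\mathbf a^{l,r}_{n,[2]}(x-1)^n$ at $x=1$ ($0\le r\le l$, $F_2^0\equiv1$). Put $$B_{l,r}(x)=\frac{x^lF_2(x)^{l-r}-\sum_{i=0}^{r-1}\mathbf a^{l,r}_{i,[2]}(x-1)^i}{(x-1)^r},\qquad \mathfrak F_j(z)=\frac1z+1+(1+z)F_j(1+z),\ j=1,2.$$ Then $$k\sum_{q=0}^{k-1}\sum_{r=0}^l\binom lr\binom{k-1}q\frac1{(q+1)!}\partial_x^q\big(x^kF_1(x)^{k-1-q}B'_{l,r}(x)\big)\Big|_{x=1}=\frac1{(2\pi\mathbf i)^2}\oint_{|z|=\epsilon}\oint_{|w|=2\epsilon}\frac{\mathfrak F_1(z)^k\mathfrak F_2(w)^l}{(z-w)^2}dz\,dw,$$ with counter-clockwise contours and $\epsilon>0$ small.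
   Context: $B_{l,r}$ is analytic near $x=1$ (removable singularity), and $B'_{l,r}$ denotes its derivative. *)

theory Defs
  imports "HOL-Analysis.Analysis"
begin

(* Counter-clockwise contour integral over the circle |z| = r, written out via the
   standard parametrisation t \<mapsto> r * exp(2 pi i t), t \<in> [0,1] (this is what the
   HOL-Complex_Analysis notion contour_integral (circlepath 0 r) unfolds to). *)
definition circ_int :: "real \<Rightarrow> (complex \<Rightarrow> complex) \<Rightarrow> complex" where
  "circ_int r f = integral {0..1}
     (\<lambda>t::real. f (complex_of_real r * exp (2 * complex_of_real pi * \<i> * complex_of_real t))
        * (2 * complex_of_real pi * \<i> * complex_of_real r * exp (2 * complex_of_real pi * \<i> * complex_of_real t)))"

definition tcoef :: "(complex \<Rightarrow> complex) \<Rightarrow> nat \<Rightarrow> complex" where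
  "tcoef g n = (deriv ^^ n) g 1 / of_nat (fact n)"

definition gfun :: "(complex \<Rightarrow> complex) \<Rightarrow> nat \<Rightarrow> nat \<Rightarrow> complex \<Rightarrow> complex" where
  "gfun F2 l r x = x ^ l * F2 x ^ (l - r)"

(* B_{l,r}, with its removable singularity at x = 1 filled in by the limit value a_r *)
definition Bfun :: "(complex \<Rightarrow> complex) \<Rightarrow> nat \<Rightarrow> nat \<Rightarrow> complex \<Rightarrow> complex" where
  "Bfun F2 l r x =
     (if x = 1 then tcoef (gfun F2 l r) r
      else (gfun F2 l r x - (\<Sum>i<r. tcoef (gfun F2 l r) i * (x - 1) ^ i)) / (x - 1) ^ r)"

definition frakF :: "(complex \<Rightarrow> complex) \<Rightarrow> complex \<Rightarrow> complex" where
  "frakF F z = 1 / z + 1 + (1 + z) * F (1 + z)"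

end

theory Submission
  imports Defs "HOL-Complex_Analysis.Complex_Analysis"
begin


lemma circ_int_eq: "circ_int r f = contour_integral (circlepath 0 r) f"
  unfolding circ_int_def contour_integral_integral vector_derivative_circlepath
  unfolding circlepath by (simp add: mult_ac)

lemma deriv_shift1: "deriv (\<lambda>t. f (1 + t)) t = deriv f (1 + t)"
proof -
  have "\<And>D. ((\<lambda>t. f (1 + t)) has_field_derivative D) (at t) = (f has_field_derivative D) (at (1 + t))"
    using DERIV_shift[of f _ t 1] by (simp add: add.commute)
  then show ?thesis by (simp add: deriv_def)
qed

lemma higher_deriv_shift1: "(deriv ^^ n) (\<lambda>t. f (1 + t)) = (\<lambda>t. (deriv ^^ n) f (1 + t))"
proof (induction n)
  case (Suc n)
  show ?case by (rule ext) (simp add: Suc deriv_shift1)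
qed simp

lemma eval_fps_split:
  fixes F :: "complex fps"
  assumes "norm z < fps_conv_radius F"
  shows "eval_fps F z = (\<Sum>i<r. fps_nth F i * z ^ i) + z ^ r * eval_fps (fps_shift r F) z"
proof -
  have s: "summable (\<lambda>n. fps_nth F n * z ^ n)" using summable_fps assms by blast
  have "eval_fps F z = (\<Sum>n. fps_nth F (n + r) * z ^ (n + r)) + (\<Sum>i<r. fps_nth F i * z ^ i)"
    unfolding eval_fps_def using suminf_split_initial_segment[OF s, of r] by simp
  also have "(\<Sum>n. fps_nth F (n + r) * z ^ (n + r)) = z ^ r * (\<Sum>n. fps_nth F (n + r) * z ^ n)"
  proof -
    have s2: "summable (\<lambda>n. fps_nth (fps_shift r F) n * z ^ n)" by (rule summable_fps) (use assms in simp)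
    have "(\<Sum>n. fps_nth F (n + r) * z ^ (n + r)) = (\<Sum>n. z ^ r * (fps_nth F (n + r) * z ^ n))"
      by (simp add: power_add mult_ac)
    also have "\<dots> = z ^ r * (\<Sum>n. fps_nth F (n + r) * z ^ n)"
      using s2 by (intro suminf_mult) simp
    finally show ?thesis .
  qed
  finally show ?thesis by (simp add: eval_fps_def)
qed

lemma has_fps_expansion_power':
  fixes F :: "complex fps"
  assumes "f has_fps_expansion F"
  shows "(\<lambda>x. f x ^ n) has_fps_expansion F ^ n"
proof (induction n)
  case (Suc n)
  have "(\<lambda>x. f x * f x ^ n) has_fps_expansion F * F ^ n"
    by (intro has_fps_expansion_mult assms Suc)
  then show ?case by simp
qed simp

lemma higher_deriv_fps:
  fixes F :: "complex fps"
  assumes "f has_fps_expansion F"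
  shows "(deriv ^^ n) f 0 = fact n * fps_nth F n"
  using fps_nth_fps_expansion[OF assms, of n] by simp

lemma Bfun_exp:
  assumes G: "(\<lambda>t. gfun F2 l r (1 + t)) has_fps_expansion G"
  shows "(\<lambda>t. Bfun F2 l r (1 + t)) has_fps_expansion fps_shift r G"
proof -
  have tc: "tcoef (gfun F2 l r) i = fps_nth G i" for i
  proof -
    have "(deriv ^^ i) (gfun F2 l r) 1 = (deriv ^^ i) (\<lambda>t. gfun F2 l r (1 + t)) 0"
      by (simp add: higher_deriv_shift1)
    then show ?thesis unfolding tcoef_def using fps_nth_fps_expansion[OF G, of i] by simp
  qed
  have rad: "fps_conv_radius G > 0" using G by (simp add: has_fps_expansion_def)
  have ev1: "eventually (\<lambda>z. eval_fps G z = gfun F2 l r (1 + z)) (nhds 0)"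
    using G by (simp add: has_fps_expansion_def)
  have ev2: "eventually (\<lambda>z. z \<in> eball 0 (fps_conv_radius G)) (nhds 0)"
    using rad by (intro eventually_nhds_in_open) (auto simp: zero_ereal_def)
  have "eventually (\<lambda>z. eval_fps (fps_shift r G) z = Bfun F2 l r (1 + z)) (nhds 0)"
    using ev1 ev2
  proof eventually_elim
    case (elim z)
    show ?case
    proof (cases "z = 0")
      case True
      then show ?thesis by (simp add: eval_fps_at_0 Bfun_def tc)
    next
      case False
      have nz: "norm z < fps_conv_radius G" using elim(2) by simp
      have "Bfun F2 l r (1 + z) = (gfun F2 l r (1 + z) - (\<Sum>i<r. fps_nth G i * z ^ i)) / z ^ r"
        using False by (simp add: Bfun_def tc)
      also have "\<dots> = eval_fps (fps_shift r G) z"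
        using False eval_fps_split[OF nz, of r] elim(1) by simp
      finally show ?thesis by simp
    qed
  qed
  then show ?thesis using rad by (simp add: has_fps_expansion_def)
qed

lemma higher_deriv_invsq:
  fixes w :: complex
  shows "z \<noteq> w \<Longrightarrow> (deriv ^^ n) (\<lambda>z. inverse (z - w) ^ 2) z
          = (-1) ^ n * fact (n + 1) * inverse (z - w) ^ (n + 2)"
proof (induction n arbitrary: z)
  case 0
  then show ?case by (simp add: power2_eq_square)
next
  case (Suc n)
  have ev: "eventually (\<lambda>y. (deriv ^^ n) (\<lambda>z. inverse (z - w) ^ 2) y
             = (-1) ^ n * fact (n + 1) * inverse (y - w) ^ (n + 2)) (nhds z)"
  proof -
    have "eventually (\<lambda>y. y \<in> - {w}) (nhds z)"
      using Suc.prems by (intro eventually_nhds_in_open) auto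
    then show ?thesis by eventually_elim (use Suc.IH in auto)
  qed
  have d: "((\<lambda>y. (-1) ^ n * fact (n + 1) * inverse (y - w) ^ (n + 2)) has_field_derivative
           (-1) ^ Suc n * fact (Suc n + 1) * inverse (z - w) ^ (Suc n + 2)) (at z)"
  proof -
    define u where "u = inverse (z - w)"
    have i: "((\<lambda>y. inverse (y - w)) has_field_derivative - (u * 1 * u)) (at z)"
      unfolding u_def using Suc.prems by (auto intro!: derivative_eq_intros)
    have D: "((\<lambda>y. (-1) ^ n * fact (n + 1) * inverse (y - w) ^ (n + 2)) has_field_derivative
           (-1) ^ n * fact (n + 1) * (of_nat (n + 2) * (- (u * 1 * u) * u ^ (n + 2 - Suc 0)))) (at z)"
      unfolding u_def by (intro DERIV_cmult DERIV_power) (use i in \<open>simp add: u_def\<close>)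
    have eq: "(-1) ^ n * fact (n + 1) * (of_nat (n + 2) * (- (u * 1 * u) * u ^ (n + 2 - Suc 0)))
        = (-1) ^ Suc n * fact (Suc n + 1) * u ^ (Suc n + 2)"
      by (simp add: algebra_simps)
    show ?thesis using D[unfolded eq] unfolding u_def .
  qed
  have "(deriv ^^ Suc n) (\<lambda>z. inverse (z - w) ^ 2) z
        = deriv (\<lambda>y. (-1) ^ n * fact (n + 1) * inverse (y - w) ^ (n + 2)) z"
    by (simp only: funpow.simps o_apply) (rule deriv_cong_ev[OF ev refl])
  also have "\<dots> = (-1) ^ Suc n * fact (Suc n + 1) * inverse (z - w) ^ (Suc n + 2)"
    using d by (rule DERIV_imp_deriv)
  finally show ?case .
qed

lemma invsq_exp:
  fixes w :: complex
  assumes "w \<noteq> 0"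
  shows "(\<lambda>z. 1 / (z - w) ^ 2) has_fps_expansion Abs_fps (\<lambda>n. of_nat (n + 1) * inverse w ^ (n + 2))"
proof -
  have feq: "(\<lambda>z. 1 / (z - w) ^ 2) = (\<lambda>z. inverse (z - w) ^ 2)"
    by (rule ext) (simp add: power_inverse divide_inverse)
  have "(\<lambda>z. inverse (z - w) ^ 2) holomorphic_on ball 0 (norm w)"
    by (intro holomorphic_intros) auto
  then have "(\<lambda>z. inverse (z - w) ^ 2) has_fps_expansion fps_expansion (\<lambda>z. inverse (z - w) ^ 2) 0"
    using assms by (intro has_fps_expansion_fps_expansion) auto
  also have "fps_expansion (\<lambda>z. inverse (z - w) ^ 2) 0 = Abs_fps (\<lambda>n. of_nat (n + 1) * inverse w ^ (n + 2))"
  proof (rule fps_ext)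
    fix n
    have "(deriv ^^ n) (\<lambda>z. inverse (z - w) ^ 2) 0 = (-1) ^ n * fact (n + 1) * inverse (0 - w) ^ (n + 2)"
      using assms by (intro higher_deriv_invsq) auto
    also have "\<dots> = fact (n + 1) * inverse w ^ (n + 2)"
      by (simp add: power_minus' power_add)
    finally show "fps_expansion (\<lambda>z. inverse (z - w) ^ 2) 0 $ n = Abs_fps (\<lambda>n. of_nat (n + 1) * inverse w ^ (n + 2)) $ n"
      by (simp add: fps_expansion_def fact_Suc)
  qed
  finally show ?thesis by (simp add: feq)
qed

lemma inner_int:
  fixes M H :: "complex \<Rightarrow> complex" and Q :: "complex fps"
  assumes holo: "M holomorphic_on ball 0 e" and eps: "0 < \<epsilon>" "\<epsilon> < e"
    and w: "\<epsilon> < norm w" and k: "0 < k"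
    and Q: "(\<lambda>z. M z ^ k) has_fps_expansion Q"
    and H: "\<And>z. z \<noteq> 0 \<Longrightarrow> H z = M z ^ k / z ^ k"
  shows "contour_integral (circlepath 0 \<epsilon>) (\<lambda>z. H z * c / (z - w) ^ 2)
       = c * (2 * pi * \<i> * (\<Sum>i=0..k-1. Q $ i * (of_nat (k - 1 - i + 1) * inverse w ^ (k - 1 - i + 2))))"
proof -
  define \<phi> where "\<phi> = (\<lambda>z. M z ^ k * (1 / (z - w) ^ 2))"
  have w0: "w \<noteq> 0" using w eps by auto
  have hol: "\<phi> holomorphic_on ball 0 (norm w)" if "norm w \<le> e"
    unfolding \<phi>_def using that holomorphic_on_subset[OF holo]
    by (intro holomorphic_intros) (auto simp: subset_iff)
  have holb: "\<phi> holomorphic_on ball 0 (min e (norm w))"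
    unfolding \<phi>_def using holomorphic_on_subset[OF holo]
    by (intro holomorphic_intros) (auto simp: subset_iff)
  have cont: "continuous_on (cball 0 \<epsilon>) \<phi>"
    using holb eps w by (intro holomorphic_on_imp_continuous_on holomorphic_on_subset[OF holb]) auto
  have holeps: "\<phi> holomorphic_on ball 0 \<epsilon>"
    using eps w by (intro holomorphic_on_subset[OF holb]) auto
  have "((\<lambda>u. \<phi> u / (u - 0) ^ Suc (k - 1)) has_contour_integral
          ((2 * pi * \<i>) / fact (k - 1) * (deriv ^^ (k - 1)) \<phi> 0)) (circlepath 0 \<epsilon>)"
    using eps by (intro Cauchy_has_contour_integral_higher_derivative_circlepath cont holeps) auto
  then have I: "((\<lambda>u. c * (\<phi> u / (u - 0) ^ Suc (k - 1))) has_contour_integral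
          c * ((2 * pi * \<i>) / fact (k - 1) * (deriv ^^ (k - 1)) \<phi> 0)) (circlepath 0 \<epsilon>)"
    by (rule has_contour_integral_lmul)
  have "((\<lambda>z. H z * c / (z - w) ^ 2) has_contour_integral
          c * ((2 * pi * \<i>) / fact (k - 1) * (deriv ^^ (k - 1)) \<phi> 0)) (circlepath 0 \<epsilon>)"
  proof (rule has_contour_integral_eq[OF I])
    fix z assume "z \<in> path_image (circlepath 0 \<epsilon>)"
    then have "norm z = \<epsilon>" using eps by (simp add: path_image_circlepath sphere_def dist_norm)
    then have z0: "z \<noteq> 0" using eps by auto
    show "c * (\<phi> z / (z - 0) ^ Suc (k - 1)) = H z * c / (z - w) ^ 2"
      using z0 k by (simp add: H[OF z0] \<phi>_def mult_ac)
  qed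
  then have CI: "contour_integral (circlepath 0 \<epsilon>) (\<lambda>z. H z * c / (z - w) ^ 2)
      = c * ((2 * pi * \<i>) / fact (k - 1) * (deriv ^^ (k - 1)) \<phi> 0)"
    by (rule contour_integral_unique)
  have E: "\<phi> has_fps_expansion Q * Abs_fps (\<lambda>n. of_nat (n + 1) * inverse w ^ (n + 2))"
    unfolding \<phi>_def by (intro has_fps_expansion_mult Q invsq_exp w0)
  have "(deriv ^^ (k - 1)) \<phi> 0 = fact (k - 1) * (\<Sum>i=0..k-1. Q $ i * (of_nat (k - 1 - i + 1) * inverse w ^ (k - 1 - i + 2)))"
    using higher_deriv_fps[OF E, of "k - 1"] by (simp add: fps_mult_nth)
  then show ?thesis using CI by simp
qed

lemma outer_int:
  fixes N H2 :: "complex \<Rightarrow> complex" and P Q :: "complex fps"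
  assumes holo: "N holomorphic_on ball 0 e" and rho: "0 < \<rho>" "\<rho> < e"
    and P: "(\<lambda>z. N z ^ l) has_fps_expansion P"
    and H: "\<And>z. z \<noteq> 0 \<Longrightarrow> H2 z = N z ^ l / z ^ l"
  shows "contour_integral (circlepath 0 \<rho>)
          (\<lambda>w. H2 w * (C * (\<Sum>i=0..k-1. Q $ i * (of_nat (k - 1 - i + 1) * inverse w ^ (k - 1 - i + 2)))))
       = (\<Sum>i=0..k-1. C * Q $ i * of_nat (k - 1 - i + 1) * (2 * pi * \<i> * P $ (l + (k - 1 - i + 1))))"
proof -
  define \<psi> where "\<psi> = (\<lambda>z. N z ^ l)"
  have cont: "continuous_on (cball 0 \<rho>) \<psi>"
    unfolding \<psi>_def using rho
    by (intro holomorphic_on_imp_continuous_on holomorphic_on_subset[OF holomorphic_on_power[OF holo]]) auto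
  have hol: "\<psi> holomorphic_on ball 0 \<rho>"
    unfolding \<psi>_def using rho
    by (intro holomorphic_on_subset[OF holomorphic_on_power[OF holo]]) auto
  have T: "((\<lambda>w. C * Q $ i * of_nat (k - 1 - i + 1) * (\<psi> w / (w - 0) ^ Suc (l + (k - 1 - i + 1))))
         has_contour_integral C * Q $ i * of_nat (k - 1 - i + 1) * (2 * pi * \<i> * P $ (l + (k - 1 - i + 1))))
         (circlepath 0 \<rho>)" for i
  proof -
    have "((\<lambda>w. \<psi> w / (w - 0) ^ Suc (l + (k - 1 - i + 1))) has_contour_integral
           (2 * pi * \<i>) / fact (l + (k - 1 - i + 1)) * (deriv ^^ (l + (k - 1 - i + 1))) \<psi> 0) (circlepath 0 \<rho>)"
      using rho by (intro Cauchy_has_contour_integral_higher_derivative_circlepath cont hol) auto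
    also have "(2 * pi * \<i>) / fact (l + (k - 1 - i + 1)) * (deriv ^^ (l + (k - 1 - i + 1))) \<psi> 0
             = 2 * pi * \<i> * P $ (l + (k - 1 - i + 1))"
      by (subst higher_deriv_fps[OF P[folded \<psi>_def]]) (simp del: fact_Suc)
    finally show ?thesis by (rule has_contour_integral_lmul)
  qed
  have S: "((\<lambda>w. \<Sum>i=0..k-1. C * Q $ i * of_nat (k - 1 - i + 1) * (\<psi> w / (w - 0) ^ Suc (l + (k - 1 - i + 1))))
         has_contour_integral (\<Sum>i=0..k-1. C * Q $ i * of_nat (k - 1 - i + 1) * (2 * pi * \<i> * P $ (l + (k - 1 - i + 1)))))
         (circlepath 0 \<rho>)"
    by (intro has_contour_integral_sum T) auto
  have "((\<lambda>w. H2 w * (C * (\<Sum>i=0..k-1. Q $ i * (of_nat (k - 1 - i + 1) * inverse w ^ (k - 1 - i + 2)))))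
         has_contour_integral (\<Sum>i=0..k-1. C * Q $ i * of_nat (k - 1 - i + 1) * (2 * pi * \<i> * P $ (l + (k - 1 - i + 1)))))
         (circlepath 0 \<rho>)"
  proof (rule has_contour_integral_eq[OF S])
    fix z assume "z \<in> path_image (circlepath 0 \<rho>)"
    then have "norm z = \<rho>" using rho by (simp add: path_image_circlepath sphere_def dist_norm)
    then have z0: "z \<noteq> 0" using rho by auto
    have "H2 z * (C * (\<Sum>i=0..k-1. Q $ i * (of_nat (k - 1 - i + 1) * inverse z ^ (k - 1 - i + 2))))
        = (\<Sum>i=0..k-1. H2 z * (C * (Q $ i * (of_nat (k - 1 - i + 1) * inverse z ^ (k - 1 - i + 2)))))"
      by (simp add: sum_distrib_left)
    also have "\<dots> = (\<Sum>i=0..k-1. C * Q $ i * of_nat (k - 1 - i + 1) * (\<psi> z / (z - 0) ^ Suc (l + (k - 1 - i + 1))))"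
    proof (rule sum.cong[OF refl])
      fix i
      have X: "H2 z * inverse z ^ (k - 1 - i + 2) = \<psi> z / (z - 0) ^ Suc (l + (k - 1 - i + 1))"
        using z0 by (simp add: H \<psi>_def power_add divide_inverse power_inverse mult_ac)
      then show "H2 z * (C * (Q $ i * (of_nat (k - 1 - i + 1) * inverse z ^ (k - 1 - i + 2))))
          = C * Q $ i * of_nat (k - 1 - i + 1) * (\<psi> z / (z - 0) ^ Suc (l + (k - 1 - i + 1)))"
        unfolding X[symmetric] by (simp only: mult_ac)
    qed
    finally show "(\<Sum>i=0..k-1. C * Q $ i * of_nat (k - 1 - i + 1) * (\<psi> z / (z - 0) ^ Suc (l + (k - 1 - i + 1))))
        = H2 z * (C * (\<Sum>i=0..k-1. Q $ i * (of_nat (k - 1 - i + 1) * inverse z ^ (k - 1 - i + 2))))" by simp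
  qed
  then show ?thesis by (rule contour_integral_unique)
qed



lemma binom_fps:
  fixes A B :: "complex fps"
  shows "((1 + fps_X) * (1 + fps_X * A)) ^ n
     = (\<Sum>j\<le>n. fps_const (of_nat (n choose j)) * (fps_X ^ (n - j) * ((1 + fps_X) ^ n * A ^ (n - j))))"
proof -
  have "((1 + fps_X) * (1 + fps_X * A)) ^ n = (1 + fps_X) ^ n * (1 + fps_X * A) ^ n"
    by (simp add: power_mult_distrib)
  also have "(1 + fps_X * A) ^ n = (\<Sum>j\<le>n. of_nat (n choose j) * 1 ^ j * (fps_X * A) ^ (n - j))"
    by (rule binomial_ring)
  also have "(1 + fps_X) ^ n * \<dots> = (\<Sum>j\<le>n. fps_const (of_nat (n choose j)) * (fps_X ^ (n - j) * ((1 + fps_X) ^ n * A ^ (n - j))))"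
    by (simp add: sum_distrib_left power_mult_distrib fps_of_nat mult_ac)
  finally show ?thesis .
qed

lemma D_nth:
  fixes Fb :: "complex fps" and l :: nat
  defines "D \<equiv> (\<Sum>r\<le>l. fps_const (of_nat (l choose r)) * fps_deriv (fps_shift r ((1 + fps_X) ^ l * Fb ^ (l - r))))"
  shows "D $ m = of_nat (m + 1) * ((1 + fps_X) * (1 + fps_X * Fb)) ^ l $ (l + (m + 1))"
proof -
  have "((1 + fps_X) * (1 + fps_X * Fb)) ^ l $ (l + (m + 1))
      = (\<Sum>r\<le>l. of_nat (l choose r) * ((1 + fps_X) ^ l * Fb ^ (l - r)) $ (m + 1 + r))"
    unfolding binom_fps fps_sum_nth fps_mult_left_const_nth fps_X_power_mult_nth
    by (intro sum.cong refl) (auto simp: algebra_simps)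
  then show ?thesis
    unfolding D_def fps_sum_nth fps_mult_left_const_nth fps_deriv_nth fps_shift_nth
    by (simp add: sum_distrib_left mult_ac)
qed

lemma coef_id: "(of_nat (Suc k') :: complex) * of_nat (k' choose q) / of_nat (fact (q + 1)) * fact q
   = of_nat (Suc k' choose Suc q)"
proof -
  have n: "Suc q * (Suc k' choose Suc q) = Suc k' * (k' choose q)" by (rule Suc_times_binomial)
  have "(of_nat (Suc k') :: complex) * of_nat (k' choose q) = of_nat (Suc q) * of_nat (Suc k' choose Suc q)"
    by (simp only: of_nat_mult[symmetric] n mult.commute)
  moreover have "(of_nat (fact (q + 1)) :: complex) = of_nat (Suc q) * fact q"
    by (simp add: fact_Suc algebra_simps)
  ultimately show ?thesis by (simp del: binomial_Suc_Suc of_nat_Suc add: field_simps)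
qed

lemma formal_id:
  fixes Fa Fb :: "complex fps" and k l :: nat
  assumes "0 < k"
  shows "of_nat k * (\<Sum>q<k. \<Sum>r\<le>l. of_nat (l choose r) * of_nat ((k - 1) choose q) / of_nat (fact (q + 1))
            * (fact q * ((1 + fps_X) ^ k * Fa ^ (k - 1 - q) * fps_deriv (fps_shift r ((1 + fps_X) ^ l * Fb ^ (l - r)))) $ q))
       = (\<Sum>i=0..k-1. ((1 + fps_X) * (1 + fps_X * Fa)) ^ k $ i * of_nat (k - 1 - i + 1)
            * ((1 + fps_X) * (1 + fps_X * Fb)) ^ l $ (l + (k - 1 - i + 1)))"
proof -
  obtain k' where kk: "k = Suc k'" using assms by (cases k) auto
  define D where "D = (\<Sum>r\<le>l. fps_const (of_nat (l choose r)) * fps_deriv (fps_shift r ((1 + fps_X) ^ l * Fb ^ (l - r))))"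
  define QF where "QF = ((1 + fps_X) * (1 + fps_X * Fa)) ^ k"
  have Dn: "D $ m = of_nat (m + 1) * ((1 + fps_X) * (1 + fps_X * Fb)) ^ l $ (l + (m + 1))" for m
    unfolding D_def by (rule D_nth)
  have "(\<Sum>i=0..k-1. QF $ i * of_nat (k - 1 - i + 1) * ((1 + fps_X) * (1 + fps_X * Fb)) ^ l $ (l + (k - 1 - i + 1)))
      = (\<Sum>i=0..k-1. QF $ i * D $ (k - 1 - i))"
    by (intro sum.cong refl) (simp add: Dn mult_ac)
  also have "\<dots> = (QF * D) $ (k - 1)" by (simp add: fps_mult_nth)
  also have "QF * D = (\<Sum>j\<le>k. fps_const (of_nat (k choose j)) * (fps_X ^ (k - j) * ((1 + fps_X) ^ k * Fa ^ (k - j) * D)))"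
    unfolding QF_def binom_fps sum_distrib_right by (simp add: mult_ac)
  also have "\<dots> $ (k - 1) = (\<Sum>j\<le>k. of_nat (k choose j) * (if k - 1 < k - j then 0 else ((1 + fps_X) ^ k * Fa ^ (k - j) * D) $ (k - 1 - (k - j))))"
    unfolding fps_sum_nth fps_mult_left_const_nth fps_X_power_mult_nth ..
  also have "\<dots> = (\<Sum>q<k. of_nat (k choose Suc q) * ((1 + fps_X) ^ k * Fa ^ (k - 1 - q) * D) $ q)"
    unfolding kk sum.atMost_Suc_shift lessThan_Suc_atMost
    by (simp del: binomial_Suc_Suc, intro sum.cong refl) (auto simp del: binomial_Suc_Suc simp add: Suc_diff_le)
  finally have R: "(\<Sum>i=0..k-1. QF $ i * of_nat (k - 1 - i + 1) * ((1 + fps_X) * (1 + fps_X * Fb)) ^ l $ (l + (k - 1 - i + 1)))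
      = (\<Sum>q<k. of_nat (k choose Suc q) * ((1 + fps_X) ^ k * Fa ^ (k - 1 - q) * D) $ q)" .
  have L: "of_nat k * (\<Sum>r\<le>l. of_nat (l choose r) * of_nat ((k - 1) choose q) / of_nat (fact (q + 1))
            * (fact q * ((1 + fps_X) ^ k * Fa ^ (k - 1 - q) * fps_deriv (fps_shift r ((1 + fps_X) ^ l * Fb ^ (l - r)))) $ q))
      = of_nat (k choose Suc q) * ((1 + fps_X) ^ k * Fa ^ (k - 1 - q) * D) $ q" for q
  proof -
    define A where "A = (1 + fps_X) ^ k * (Fa :: complex fps) ^ (k - 1 - q)"
    have "(A * D) $ q = (\<Sum>r\<le>l. of_nat (l choose r) * (A * fps_deriv (fps_shift r ((1 + fps_X) ^ l * Fb ^ (l - r)))) $ q)"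
      unfolding D_def sum_distrib_left fps_sum_nth by (simp add: mult.left_commute[of A])
    then have "of_nat (k choose Suc q) * (A * D) $ q
       = (\<Sum>r\<le>l. (of_nat k * of_nat ((k - 1) choose q) / of_nat (fact (q + 1)) * fact q) * (of_nat (l choose r) * (A * fps_deriv (fps_shift r ((1 + fps_X) ^ l * Fb ^ (l - r)))) $ q))"
      using coef_id[of k' q] by (simp add: kk sum_distrib_left)
    then show ?thesis unfolding A_def by (simp add: sum_distrib_left mult_ac)
  qed
  show ?thesis unfolding R[unfolded QF_def] sum_distrib_left
    by (intro sum.cong refl) (rule L[unfolded sum_distrib_left])
qed



lemma shift_holo:
  assumes "F holomorphic_on ball 1 e"
  shows "(\<lambda>z. F (1 + z)) holomorphic_on ball 0 e"
proof -
  have "(F \<circ> (\<lambda>z. 1 + z)) holomorphic_on ball 0 e"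
    by (rule holomorphic_on_compose_gen[OF _ assms]) (auto intro!: holomorphic_intros simp: dist_norm)
  then show ?thesis by (simp add: o_def)
qed

lemma setupF:
  assumes hol: "F holomorphic_on ball 1 e" and e: "0 < e"
  shows "(\<lambda>z. (1 + z) * (1 + z * F (1 + z))) holomorphic_on ball 0 e"
    and "(\<lambda>z. F (1 + z)) has_fps_expansion fps_expansion (\<lambda>z. F (1 + z)) 0"
    and "(\<lambda>z. ((1 + z) * (1 + z * F (1 + z))) ^ n) has_fps_expansion
           ((1 + fps_X) * (1 + fps_X * fps_expansion (\<lambda>z. F (1 + z)) 0)) ^ n"
    and "z \<noteq> 0 \<Longrightarrow> frakF F z ^ n = ((1 + z) * (1 + z * F (1 + z))) ^ n / z ^ n"
proof -
  have h: "(\<lambda>z. F (1 + z)) holomorphic_on ball 0 e" by (rule shift_holo[OF hol])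
  show "(\<lambda>z. (1 + z) * (1 + z * F (1 + z))) holomorphic_on ball 0 e"
    by (intro holomorphic_intros h)
  show A: "(\<lambda>z. F (1 + z)) has_fps_expansion fps_expansion (\<lambda>z. F (1 + z)) 0"
    by (rule has_fps_expansion_fps_expansion[OF _ _ h]) (use e in auto)
  have X: "(\<lambda>z. 1 + z) has_fps_expansion 1 + fps_X"
    by (intro has_fps_expansion_add has_fps_expansion_1 has_fps_expansion_fps_X)
  have "(\<lambda>z. (1 + z) * (1 + z * F (1 + z))) has_fps_expansion
           (1 + fps_X) * (1 + fps_X * fps_expansion (\<lambda>z. F (1 + z)) 0)"
    by (intro has_fps_expansion_mult has_fps_expansion_add X has_fps_expansion_1 has_fps_expansion_fps_X A)
  then show "(\<lambda>z. ((1 + z) * (1 + z * F (1 + z))) ^ n) has_fps_expansion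
           ((1 + fps_X) * (1 + fps_X * fps_expansion (\<lambda>z. F (1 + z)) 0)) ^ n"
    by (rule has_fps_expansion_power')
  assume z: "z \<noteq> 0"
  have "frakF F z = (1 + z) * (1 + z * F (1 + z)) / z"
    using z by (simp add: frakF_def field_simps)
  then show "frakF F z ^ n = ((1 + z) * (1 + z * F (1 + z))) ^ n / z ^ n"
    by (simp add: power_divide)
qed

lemma lhs_term:
  assumes h1: "F1 holomorphic_on ball 1 e" and h2: "F2 holomorphic_on ball 1 e" and e: "0 < e"
  shows "(deriv ^^ q) (\<lambda>x. x ^ k * F1 x ^ (k - 1 - q) * deriv (Bfun F2 l r) x) 1
     = fact q * ((1 + fps_X) ^ k * fps_expansion (\<lambda>z. F1 (1 + z)) 0 ^ (k - 1 - q)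
          * fps_deriv (fps_shift r ((1 + fps_X) ^ l * fps_expansion (\<lambda>z. F2 (1 + z)) 0 ^ (l - r)))) $ q"
proof -
  have X: "(\<lambda>z. 1 + z) has_fps_expansion 1 + fps_X"
    by (intro has_fps_expansion_add has_fps_expansion_1 has_fps_expansion_fps_X)
  note A1 = setupF(2)[OF h1 e] and A2 = setupF(2)[OF h2 e]
  have G: "(\<lambda>t. gfun F2 l r (1 + t)) has_fps_expansion (1 + fps_X) ^ l * fps_expansion (\<lambda>z. F2 (1 + z)) 0 ^ (l - r)"
    unfolding gfun_def by (intro has_fps_expansion_mult has_fps_expansion_power' X A2)
  have B: "(\<lambda>t. deriv (\<lambda>t. Bfun F2 l r (1 + t)) t) has_fps_expansion
      fps_deriv (fps_shift r ((1 + fps_X) ^ l * fps_expansion (\<lambda>z. F2 (1 + z)) 0 ^ (l - r)))"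
    using has_fps_expansion_deriv[OF Bfun_exp[OF G]] by simp
  have E: "(\<lambda>t. (1 + t) ^ k * F1 (1 + t) ^ (k - 1 - q) * deriv (\<lambda>t. Bfun F2 l r (1 + t)) t) has_fps_expansion
     (1 + fps_X) ^ k * fps_expansion (\<lambda>z. F1 (1 + z)) 0 ^ (k - 1 - q)
          * fps_deriv (fps_shift r ((1 + fps_X) ^ l * fps_expansion (\<lambda>z. F2 (1 + z)) 0 ^ (l - r)))"
    by (intro has_fps_expansion_mult has_fps_expansion_power' X A1 B)
  have "(deriv ^^ q) (\<lambda>x. x ^ k * F1 x ^ (k - 1 - q) * deriv (Bfun F2 l r) x) 1
      = (deriv ^^ q) (\<lambda>t. (1 + t) ^ k * F1 (1 + t) ^ (k - 1 - q) * deriv (Bfun F2 l r) (1 + t)) 0"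
    using fun_cong[OF higher_deriv_shift1[of q "\<lambda>x. x ^ k * F1 x ^ (k - 1 - q) * deriv (Bfun F2 l r) x"], of 0]
    by simp
  also have "(\<lambda>t. (1 + t) ^ k * F1 (1 + t) ^ (k - 1 - q) * deriv (Bfun F2 l r) (1 + t))
      = (\<lambda>t. (1 + t) ^ k * F1 (1 + t) ^ (k - 1 - q) * deriv (\<lambda>t. Bfun F2 l r (1 + t)) t)"
    by (simp add: deriv_shift1)
  finally show ?thesis using higher_deriv_fps[OF E] by simp
qed

lemma cont_circ_vd: "continuous_on {0..1} (\<lambda>t. vector_derivative (circlepath 0 r) (at t))"
  unfolding vector_derivative_circlepath by (intro continuous_intros)

lemma cont_integrand:
  assumes h1: "F1 holomorphic_on ball 1 e" and h2: "F2 holomorphic_on ball 1 e"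
    and eps: "0 < \<epsilon>" "2 * \<epsilon> < e"
  shows "continuous_on (path_image (circlepath 0 \<epsilon>) \<times> path_image (circlepath 0 (2 * \<epsilon>)))
          (\<lambda>(z, w). frakF F1 z ^ k * frakF F2 w ^ l / (z - w) ^ 2)"
proof -
  define S where "S = path_image (circlepath 0 \<epsilon>) \<times> path_image (circlepath 0 (2 * \<epsilon>))"
  have S: "p \<in> S \<Longrightarrow> norm (fst p) = \<epsilon> \<and> norm (snd p) = 2 * \<epsilon>" for p
    using eps by (auto simp: S_def path_image_circlepath sphere_def dist_norm)
  have c1: "continuous_on (ball 1 e) F1" using h1 by (rule holomorphic_on_imp_continuous_on)
  have c2: "continuous_on (ball 1 e) F2" using h2 by (rule holomorphic_on_imp_continuous_on)
  have i1: "(\<lambda>p. 1 + fst p) ` S \<subseteq> ball 1 e"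
    using S eps by (force simp: dist_norm)
  have i2: "(\<lambda>p. 1 + snd p) ` S \<subseteq> ball 1 e"
    using S eps by (force simp: dist_norm)
  have "continuous_on S (\<lambda>p. frakF F1 (fst p) ^ k * frakF F2 (snd p) ^ l / (fst p - snd p) ^ 2)"
    unfolding frakF_def
    apply (intro continuous_intros continuous_on_compose2[OF c1 _ i1] continuous_on_compose2[OF c2 _ i2])
    using S eps by (fastforce simp: dist_norm)+
  then show ?thesis unfolding S_def by (simp add: case_prod_unfold)
qed

theorem mainTheorem15:
  fixes F1 F2 :: "complex \<Rightarrow> complex" and k l :: nat
  assumes "F1 analytic_on {1}" and "F2 analytic_on {1}" and "0 < k" and "0 < l"
  shows "\<exists>\<epsilon>0>0. \<forall>\<epsilon>::real. 0 < \<epsilon> \<and> \<epsilon> < \<epsilon>0 \<longrightarrow>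
    of_nat k * (\<Sum>q<k. \<Sum>r\<le>l. of_nat (l choose r) * of_nat ((k - 1) choose q)
        / of_nat (fact (q + 1))
        * (deriv ^^ q) (\<lambda>x. x ^ k * F1 x ^ (k - 1 - q) * deriv (Bfun F2 l r) x) 1)
    = 1 / (2 * complex_of_real pi * \<i>) ^ 2 *
      circ_int \<epsilon> (\<lambda>z. circ_int (2 * \<epsilon>)
        (\<lambda>w. frakF F1 z ^ k * frakF F2 w ^ l / (z - w) ^ 2))"
proof -
  obtain e1 where e1: "e1 > 0" "F1 holomorphic_on ball 1 e1"
    using assms(1) unfolding analytic_on_def by auto
  obtain e2 where e2: "e2 > 0" "F2 holomorphic_on ball 1 e2"
    using assms(2) unfolding analytic_on_def by auto
  define e where "e = min e1 e2"
  have e: "e > 0" using e1 e2 by (simp add: e_def)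
  have h1: "F1 holomorphic_on ball 1 e" using e1 by (rule_tac holomorphic_on_subset) (auto simp: e_def)
  have h2: "F2 holomorphic_on ball 1 e" using e2 by (rule_tac holomorphic_on_subset) (auto simp: e_def)
  define Fa where "Fa = fps_expansion (\<lambda>z. F1 (1 + z)) 0"
  define Fb where "Fb = fps_expansion (\<lambda>z. F2 (1 + z)) 0"
  define QF where "QF = ((1 + fps_X) * (1 + fps_X * Fa)) ^ k"
  define PF where "PF = ((1 + fps_X) * (1 + fps_X * Fb)) ^ l"
  have LHS: "of_nat k * (\<Sum>q<k. \<Sum>r\<le>l. of_nat (l choose r) * of_nat ((k - 1) choose q)
        / of_nat (fact (q + 1))
        * (deriv ^^ q) (\<lambda>x. x ^ k * F1 x ^ (k - 1 - q) * deriv (Bfun F2 l r) x) 1)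
     = (\<Sum>i=0..k-1. QF $ i * of_nat (k - 1 - i + 1) * PF $ (l + (k - 1 - i + 1)))"
    unfolding lhs_term[OF h1 h2 e] QF_def PF_def Fa_def Fb_def
    by (rule formal_id[OF assms(3)])
  show ?thesis
  proof (intro exI[of _ "e / 2"] conjI allI impI)
    show "e / 2 > 0" using e by simp
    fix \<epsilon> :: real assume eps: "0 < \<epsilon> \<and> \<epsilon> < e / 2"
    then have eps1: "0 < \<epsilon>" and eps2: "2 * \<epsilon> < e" by auto
    have "circ_int \<epsilon> (\<lambda>z. circ_int (2 * \<epsilon>) (\<lambda>w. frakF F1 z ^ k * frakF F2 w ^ l / (z - w) ^ 2))
        = contour_integral (circlepath 0 \<epsilon>) (\<lambda>z. contour_integral (circlepath 0 (2 * \<epsilon>))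
             (\<lambda>w. frakF F1 z ^ k * frakF F2 w ^ l / (z - w) ^ 2))"
      by (simp only: circ_int_eq)
    also have "\<dots> = contour_integral (circlepath 0 (2 * \<epsilon>)) (\<lambda>w. contour_integral (circlepath 0 \<epsilon>)
             (\<lambda>z. frakF F1 z ^ k * frakF F2 w ^ l / (z - w) ^ 2))"
      by (rule contour_integral_swap[OF cont_integrand[OF h1 h2 eps1 eps2]])
         (simp_all add: cont_circ_vd)
    also have "\<dots> = contour_integral (circlepath 0 (2 * \<epsilon>)) (\<lambda>w. frakF F2 w ^ l *
           (2 * pi * \<i> * (\<Sum>i=0..k-1. QF $ i * (of_nat (k - 1 - i + 1) * inverse w ^ (k - 1 - i + 2)))))"
    proof (rule contour_integral_cong[OF refl])
      fix w assume "w \<in> path_image (circlepath 0 (2 * \<epsilon>))"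
      then have nw: "norm w = 2 * \<epsilon>" using eps1 by (simp add: path_image_circlepath sphere_def dist_norm)
      show "contour_integral (circlepath 0 \<epsilon>) (\<lambda>z. frakF F1 z ^ k * frakF F2 w ^ l / (z - w) ^ 2)
          = frakF F2 w ^ l * (2 * pi * \<i> * (\<Sum>i=0..k-1. QF $ i * (of_nat (k - 1 - i + 1) * inverse w ^ (k - 1 - i + 2))))"
        unfolding QF_def Fa_def
        by (rule inner_int[OF setupF(1)[OF h1 e] eps1 _ _ assms(3) setupF(3)[OF h1 e] setupF(4)[OF h1 e]])
           (use nw eps1 eps2 in auto)
    qed
    also have "\<dots> = (\<Sum>i=0..k-1. (2 * pi * \<i>) * QF $ i * of_nat (k - 1 - i + 1) * (2 * pi * \<i> * PF $ (l + (k - 1 - i + 1))))"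
      unfolding PF_def Fb_def
      by (rule outer_int[OF setupF(1)[OF h2 e] _ eps2 setupF(3)[OF h2 e] setupF(4)[OF h2 e]])
         (use eps1 in auto)
    finally have R0: "circ_int \<epsilon> (\<lambda>z. circ_int (2 * \<epsilon>) (\<lambda>w. frakF F1 z ^ k * frakF F2 w ^ l / (z - w) ^ 2))
       = (\<Sum>i=0..k-1. (2 * pi * \<i>) * QF $ i * of_nat (k - 1 - i + 1) * (2 * pi * \<i> * PF $ (l + (k - 1 - i + 1))))" .
    have R: "circ_int \<epsilon> (\<lambda>z. circ_int (2 * \<epsilon>) (\<lambda>w. frakF F1 z ^ k * frakF F2 w ^ l / (z - w) ^ 2))
       = (2 * pi * \<i>) ^ 2 * (\<Sum>i=0..k-1. QF $ i * of_nat (k - 1 - i + 1) * PF $ (l + (k - 1 - i + 1)))"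
      unfolding R0 sum_distrib_left by (intro sum.cong refl) (simp only: power2_eq_square mult_ac)
    show "of_nat k * (\<Sum>q<k. \<Sum>r\<le>l. of_nat (l choose r) * of_nat ((k - 1) choose q)
        / of_nat (fact (q + 1))
        * (deriv ^^ q) (\<lambda>x. x ^ k * F1 x ^ (k - 1 - q) * deriv (Bfun F2 l r) x) 1)
      = 1 / (2 * complex_of_real pi * \<i>) ^ 2 *
        circ_int \<epsilon> (\<lambda>z. circ_int (2 * \<epsilon>)
          (\<lambda>w. frakF F1 z ^ k * frakF F2 w ^ l / (z - w) ^ 2))"
      unfolding LHS R by simp
  qed
qed

end
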